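(* Assume either (i) $F(x)=0$ for $x<2$, $F$ nondegenerate, and $1-F(x)\le cx^{-(\tau-1)}$ for all $x\ge0$ for some $c>0$, $\tau>3$; or (ii) $F(x)=0$ for $x<2$, $F$ nondegenerate, and $c_1x^{-(\tau-1)}\le1-F(x)\le c_2x^{-(\tau-1)}$ for all $x\ge0$ for some $\tau\in(2,3)$, $0<c_1\le c_2<\infty$. Let $a_n=n^{1/2}$ in case (i) and $a_n=n^{(\tau-2)/(\tau-1)}$ in case (ii), and let $(\underline m_n)$ satisfy $\underline m_n/a_n\to0$. Then $\mathbb{P}(R_{\underline m_n}>\underline m_n)\to0$ as $n\to\infty$.
   Context: Configuration model: $D_1,\dots,D_n$ are i.i.d. with distribution function $F$ (parity fixed by replacing $D_n$ by $D_n+1$ if needed), $L_n=\sum_iD_i$, vertex $i$ has $D_i$ stubs, stubs are paired uniformly at random, each edge gets an independent mean-one exponential weight. Shortest-weight graph (SWG) construction from vertex $1$: one keeps allowed stubs, free stubs (not yet paired) and artificial stubs (a subset of allowed stubs). $\mathrm{SWG}_0$ is vertex $1$; at time $1$ the allowed stubs are the $D_1$ stubs of vertex $1$. For $m\ge2$ (while allowed stubs remain) choose an allowed stub uniformly at random. (1) If it is not artificial, pair it with a uniformly chosen free stub different from itself. (1a) If the paired stub is not allowed, it is incident to a vertex $v$ not yet in the SWG; $v$ is added as a real vertex and the chosen stub is replaced among the allowed stubs by the other $D_v-1$ stubs of $v$; both stubs leave the free stubs. (1b) If the paired stub is allowed, both are removed from allowed and free stubs, a new artificial stub is added to the allowed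 stubs, and an artificial (non-real) vertex is added. (2) If the chosen stub is artificial, it is removed from the allowed stubs. Vertex $1$ is real. $R_m=\min\{j\ge0:\mathrm{SWG}_j\text{ contains } m+1\text{ real vertices}\}$. *)

theory Defs
  imports "HOL-Probability.Probability"
begin

text \<open>Stubs: a real stub is (v, i) with vertex v and index i < D v;
  artificial stubs are labelled by a counter.\<close>
datatype stub = RS "nat \<times> nat" | AS nat

record swg_state =
  allowed :: "stub set"
  free    :: "(nat \<times> nat) set"
  realv   :: "nat set"
  nart    :: nat

definition all_stubs :: "nat \<Rightarrow> (nat \<Rightarrow> nat) \<Rightarrow> (nat \<times> nat) set" where
  "all_stubs n D = {(v, i). v \<in> {1..n} \<and> i < D v}"

definition fix_parity :: "nat \<Rightarrow> (nat \<Rightarrow> nat) \<Rightarrow> (nat \<Rightarrow> nat)" where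
  "fix_parity n D = (if odd (\<Sum>i\<in>{1..n}. D i) then D(n := D n + 1) else D)"

definition degrees :: "nat pmf \<Rightarrow> nat \<Rightarrow> (nat \<Rightarrow> nat) pmf" where
  "degrees p n = map_pmf (fix_parity n) (Pi_pmf {1..n} 0 (\<lambda>_. p))"

definition swg_init :: "nat \<Rightarrow> (nat \<Rightarrow> nat) \<Rightarrow> swg_state" where
  "swg_init n D = \<lparr>allowed = {RS (1, i) | i. i < D 1}, free = all_stubs n D,
                   realv = {1}, nart = 0\<rparr>"

definition swg_step :: "(nat \<Rightarrow> nat) \<Rightarrow> swg_state \<Rightarrow> swg_state pmf" where
  "swg_step D st =
    (if allowed st = {} then return_pmf st else
     pmf_of_set (allowed st) \<bind> (\<lambda>s.
       case s of
         AS a \<Rightarrow> return_pmf (st\<lparr>allowed := allowed st - {s}\<rparr>)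
       | RS x \<Rightarrow>
           (if free st - {x} = {} then return_pmf st else
            pmf_of_set (free st - {x}) \<bind> (\<lambda>y.
              if RS y \<in> allowed st then
                return_pmf (st\<lparr>allowed := (allowed st - {RS x, RS y}) \<union> {AS (nart st)},
                               free := free st - {x, y},
                               nart := Suc (nart st)\<rparr>)
              else
                return_pmf (st\<lparr>allowed := (allowed st - {RS x}) \<union>
                                    {RS (fst y, i) | i. i < D (fst y) \<and> i \<noteq> snd y},
                               free := free st - {x, y},
                               realv := realv st \<union> {fst y}\<rparr>)))))"

primrec swg_path :: "nat \<Rightarrow> (nat \<Rightarrow> nat) \<Rightarrow> nat \<Rightarrow> swg_state list pmf" where
  "swg_path n D 0 = return_pmf [swg_init n D]"
| "swg_path n D (Suc k) =
     swg_path n D k \<bind> (\<lambda>xs. map_pmf (\<lambda>s. xs @ [s]) (swg_step D (last xs)))"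

definition cm_swg :: "nat pmf \<Rightarrow> nat \<Rightarrow> nat \<Rightarrow> swg_state list pmf" where
  "cm_swg p n m = degrees p n \<bind> (\<lambda>D. swg_path n D m)"

text \<open>The event R_m > m, where R_m = min{j. SWG_j contains m+1 real vertices}
  (min of the empty set = infinity).\<close>
definition R_gt :: "nat \<Rightarrow> swg_state list \<Rightarrow> bool" where
  "R_gt m xs \<longleftrightarrow> \<not> (\<exists>j\<le>m. card (realv (xs ! j)) = m + 1)"

definition deg_cdf :: "nat pmf \<Rightarrow> real \<Rightarrow> real" where
  "deg_cdf p x = measure_pmf.prob p {k. real k \<le> x}"

definition nondegenerate :: "(real \<Rightarrow> real) \<Rightarrow> bool" where
  "nondegenerate F \<longleftrightarrow> \<not> (\<exists>a. \<forall>x. F x = (if x < a then 0 else 1))"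

end

theory Submission
  imports Defs
begin


definition Es :: "(nat\<Rightarrow>nat) \<Rightarrow> swg_state \<Rightarrow> real" where
  "Es D s = (\<Sum>v\<in>realv s. real (D v))"

definition good :: "nat \<Rightarrow> (nat\<Rightarrow>nat) \<Rightarrow> nat \<Rightarrow> swg_state \<Rightarrow> bool" where
 "good n D j s \<longleftrightarrow> nart s = 0 \<and> finite (realv s) \<and> card (realv s) = Suc j \<and> realv s \<subseteq> {1..n}
   \<and> free s \<subseteq> all_stubs n D \<and> 2*n \<le> card (free s) + 2*j
   \<and> allowed s \<subseteq> RS ` {z\<in>free s. fst z \<in> realv s} \<and> allowed s \<noteq> {}
   \<and> (\<forall>z\<in>free s. RS z \<notin> allowed s \<longrightarrow> fst z \<notin> realv s)
   \<and> (\<forall>z\<in>all_stubs n D. fst z \<notin> realv s \<longrightarrow> z \<in> free s)"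

lemma finite_all_stubs: "finite (all_stubs n D)"
proof -
  have "all_stubs n D \<subseteq> {1..n} \<times> {..<Max (D ` {1..n})}"
    unfolding all_stubs_def
    by auto (metis Max_ge atLeastAtMost_iff finite_atLeastAtMost finite_imageI image_eqI order_less_le_trans)
  thus ?thesis by (rule finite_subset) auto
qed

lemma all_stubs_Sigma: "all_stubs n D = Sigma {1..n} (\<lambda>v. {..<D v})"
  unfolding all_stubs_def by auto

lemma card_all_stubs: "card (all_stubs n D) = (\<Sum>v\<in>{1..n}. D v)"
  unfolding all_stubs_Sigma by (simp add: card_SigmaI)

lemma good_step:
  assumes g: "good n D j s" and D2: "\<forall>v\<in>{1..n}. 2 \<le> D v"
    and x: "RS x \<in> allowed s" and y: "y \<in> free s - {x}" and ny: "RS y \<notin> allowed s"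
  defines "s' \<equiv> s\<lparr>allowed := (allowed s - {RS x}) \<union>
                                    {RS (fst y, i) | i. i < D (fst y) \<and> i \<noteq> snd y},
                               free := free s - {x, y},
                               realv := realv s \<union> {fst y}\<rparr>"
  shows "good n D (Suc j) s'" "Es D s' = Es D s + D (fst y)"
proof -
  have xf: "x \<in> free s" "fst x \<in> realv s" using g x unfolding good_def by auto
  have yf: "y \<in> free s" "y \<noteq> x" using y by auto
  have ynr: "fst y \<notin> realv s" using g yf ny unfolding good_def by auto
  have ya: "y \<in> all_stubs n D" using g yf unfolding good_def by auto
  hence yv: "fst y \<in> {1..n}" "snd y < D (fst y)" unfolding all_stubs_def by auto
  have fin: "finite (realv s)" using g unfolding good_def by auto
  show "Es D s' = Es D s + D (fst y)"
    unfolding Es_def s'_def using fin ynr by simp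
  have finf: "finite (free s)" using g finite_all_stubs unfolding good_def by (meson finite_subset)
  have cf: "card (free s - {x, y}) = card (free s) - 2"
    using xf yf finf by (simp add: card_Diff_subset)
  have cf2: "2 \<le> card (free s)"
  proof -
    have "{x,y} \<subseteq> free s" using xf yf by auto
    hence "card {x,y} \<le> card (free s)" using finf by (rule card_mono[rotated])
    thus ?thesis using yf by simp
  qed
  have ex: "\<exists>i. i < D (fst y) \<and> i \<noteq> snd y"
  proof -
    have "2 \<le> D (fst y)" using D2 yv by auto
    thus ?thesis by (cases "snd y = 0") (rule exI[of _ 1], simp, rule exI[of _ 0], simp)
  qed
  define A' where "A' = (allowed s - {RS x}) \<union> {RS (fst y, i) | i. i < D (fst y) \<and> i \<noteq> snd y}"
  have sA: "allowed s' = A'" "free s' = free s - {x,y}" "realv s' = insert (fst y) (realv s)" "nart s' = nart s"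
    unfolding s'_def A'_def by auto
  show "good n D (Suc j) s'"
    unfolding good_def sA
  proof (intro conjI)
    show "finite (insert (fst y) (realv s))" using fin by simp
    show "card (insert (fst y) (realv s)) = Suc (Suc j)" using fin ynr g unfolding good_def by simp
    show "nart s = 0" using g unfolding good_def by simp
    show "insert (fst y) (realv s) \<subseteq> {1..n}" using yv g unfolding good_def by auto
    show "free s - {x, y} \<subseteq> all_stubs n D" using g unfolding good_def by auto
    have "2*n \<le> card (free s) + 2*j" using g unfolding good_def by simp
    thus "2 * n \<le> card (free s - {x, y}) + 2 * Suc j" using cf cf2 by (simp only: mult_Suc_right)
    show "A' \<noteq> {}" using ex unfolding A'_def by auto
    show "A' \<subseteq> RS ` {z \<in> free s - {x, y}. fst z \<in> insert (fst y) (realv s)}"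
    proof
      fix a assume "a \<in> A'"
      then consider "a \<in> allowed s - {RS x}" | "a \<in> {RS (fst y, i) |i. i < D (fst y) \<and> i \<noteq> snd y}"
        unfolding A'_def by blast
      thus "a \<in> RS ` {z \<in> free s - {x, y}. fst z \<in> insert (fst y) (realv s)}"
      proof cases
        case 1
        then obtain z where z: "a = RS z" "z \<in> free s" "fst z \<in> realv s" using g unfolding good_def by blast
        have "z \<noteq> x" using 1 z by auto
        moreover have "z \<noteq> y" using z ynr by auto
        ultimately show ?thesis using z by auto
      next
        case 2
        then obtain i where i: "a = RS (fst y, i)" "i < D (fst y)" "i \<noteq> snd y" by blast
        have "(fst y, i) \<in> all_stubs n D" using i yv unfolding all_stubs_def by auto
        hence "(fst y, i) \<in> free s" using g ynr unfolding good_def by auto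
        moreover have "(fst y, i) \<noteq> x" using xf ynr by auto
        moreover have "(fst y, i) \<noteq> y" using i by (cases y) auto
        ultimately show ?thesis using i by auto
      qed
    qed
    show "\<forall>z\<in>free s - {x, y}. RS z \<notin> A' \<longrightarrow> fst z \<notin> insert (fst y) (realv s)"
    proof (intro ballI impI)
      fix z assume z: "z \<in> free s - {x, y}" and h: "RS z \<notin> A'"
      have za: "z \<in> all_stubs n D" using z g unfolding good_def by auto
      have "fst z \<noteq> fst y"
      proof
        assume e: "fst z = fst y"
        have "snd z < D (fst y)" using za e unfolding all_stubs_def by auto
        moreover have "snd z \<noteq> snd y" using z e by (cases z, cases y) auto
        ultimately show False using h e unfolding A'_def by (cases z) auto
      qed
      moreover have "RS z \<notin> allowed s" using h z unfolding A'_def by auto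
      ultimately show "fst z \<notin> insert (fst y) (realv s)" using z g unfolding good_def by auto
    qed
    show "\<forall>z\<in>all_stubs n D. fst z \<notin> insert (fst y) (realv s) \<longrightarrow> z \<in> free s - {x, y}"
      using g xf unfolding good_def by auto
  qed
qed



definition Phi :: "nat \<Rightarrow> (nat\<Rightarrow>nat) \<Rightarrow> real \<Rightarrow> nat \<Rightarrow> swg_state \<Rightarrow> real" where
  "Phi n D T j s = (if good n D j s then min 1 (Es D s / T) else 1)"

definition Qs :: "nat \<Rightarrow> (nat\<Rightarrow>nat) \<Rightarrow> real \<Rightarrow> real" where
  "Qs n D T = (\<Sum>v\<in>{1..n}. real (D v) * min 1 (real (D v) / T))"

lemma Es_nonneg: "0 \<le> Es D s" unfolding Es_def by (simp add: sum_nonneg)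

lemma Phi_le_1: "Phi n D T j s \<le> 1" unfolding Phi_def by auto

lemma Phi_nonneg: "0 < T \<Longrightarrow> 0 \<le> Phi n D T j s" unfolding Phi_def using Es_nonneg[of D s] by auto

lemma Qs_nonneg: "0 < T \<Longrightarrow> 0 \<le> Qs n D T" unfolding Qs_def by (auto intro!: sum_nonneg)

lemma nn_integral_le_1_pmf:
  assumes "\<And>x. f x \<le> 1"
  shows "(\<integral>\<^sup>+x. ennreal (f x) \<partial>measure_pmf M) \<le> 1"
proof -
  have "(\<integral>\<^sup>+x. ennreal (f x) \<partial>measure_pmf M) \<le> (\<integral>\<^sup>+x. 1 \<partial>measure_pmf M)"
    by (intro nn_integral_mono) (use assms in auto)
  thus ?thesis by simp
qed

lemma nn_integral_le_const_pmf:
  assumes "\<And>x. x \<in> set_pmf M \<Longrightarrow> f x \<le> c"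
  shows "(\<integral>\<^sup>+x. f x \<partial>measure_pmf M) \<le> c"
proof -
  have "(\<integral>\<^sup>+x. f x \<partial>measure_pmf M) \<le> (\<integral>\<^sup>+x. c \<partial>measure_pmf M)"
    by (intro nn_integral_mono_AE) (use assms in \<open>auto simp: AE_measure_pmf_iff\<close>)
  thus ?thesis by simp
qed

lemma card_allowed_le:
  assumes g: "good n D j s"
  shows "real (card (allowed s)) \<le> Es D s"
proof -
  have fin: "finite (realv s)" using g unfolding good_def by auto
  have sub: "allowed s \<subseteq> RS ` Sigma (realv s) (\<lambda>v. {..<D v})"
  proof
    fix a assume "a \<in> allowed s"
    then obtain z where z: "a = RS z" "z \<in> free s" "fst z \<in> realv s" using g unfolding good_def by blast
    hence "z \<in> all_stubs n D" using g unfolding good_def by blast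
    thus "a \<in> RS ` Sigma (realv s) (\<lambda>v. {..<D v})" using z by (cases z) (auto simp: all_stubs_def)
  qed
  have "card (allowed s) \<le> card (RS ` Sigma (realv s) (\<lambda>v. {..<D v}))"
    by (rule card_mono) (use fin sub in auto)
  also have "\<dots> \<le> card (Sigma (realv s) (\<lambda>v. {..<D v}))" by (rule card_image_le) (use fin in auto)
  also have "\<dots> = (\<Sum>v\<in>realv s. D v)" using fin by (simp add: card_SigmaI)
  finally show ?thesis unfolding Es_def by (metis of_nat_le_iff of_nat_sum)
qed

lemma min_add_le: "0 \<le> u \<Longrightarrow> 0 \<le> v \<Longrightarrow> min 1 (u+v) \<le> min 1 u + min 1 (v::real)"
  by (auto simp: min_def)

lemma step_bound:
  assumes D2: "\<forall>v\<in>{1..n}. 2 \<le> D v" and T: "0 < T" and nj: "2*j+1 \<le> n"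
  shows "(\<integral>\<^sup>+t. ennreal (Phi n D T (Suc j) t) \<partial>swg_step D s)
           \<le> ennreal (Phi n D T j s + (T + Qs n D T)/n)"
proof (cases "good n D j s \<and> Es D s < T")
  case False
  hence "Phi n D T j s = 1" unfolding Phi_def using T by (auto simp: min_def le_divide_eq_1)
  hence "1 \<le> Phi n D T j s + (T + Qs n D T)/n" using Qs_nonneg[OF T] T by auto
  hence "(1::ennreal) \<le> ennreal (Phi n D T j s + (T + Qs n D T)/n)" by (simp add: ennreal_le_iff)
  thus ?thesis using nn_integral_le_1_pmf[of "Phi n D T (Suc j)"] Phi_le_1 by (meson order_trans)
next
  case True
  hence g: "good n D j s" and EsT: "Es D s < T" by auto
  have Phij: "Phi n D T j s = Es D s / T" using g EsT T unfolding Phi_def by auto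
  have ne: "allowed s \<noteq> {}" using g unfolding good_def by auto
  have finr: "finite (realv s)" using g unfolding good_def by auto
  have finf: "finite (free s)" using g finite_all_stubs unfolding good_def by (meson finite_subset)
  have fina: "finite (allowed s)"
  proof -
    have "allowed s \<subseteq> RS ` free s" using g unfolding good_def by auto
    thus ?thesis using finf by (meson finite_imageI finite_subset)
  qed
  define \<delta> where "\<delta> = (T + Qs n D T)/n"
  have inner: "(\<integral>\<^sup>+t. ennreal (Phi n D T (Suc j) t) \<partial>(case a of
         AS b \<Rightarrow> return_pmf (s\<lparr>allowed := allowed s - {a}\<rparr>)
       | RS x \<Rightarrow>
           (if free s - {x} = {} then return_pmf s else
            pmf_of_set (free s - {x}) \<bind> (\<lambda>y.
              if RS y \<in> allowed s then
                return_pmf (s\<lparr>allowed := (allowed s - {RS x, RS y}) \<union> {AS (nart s)},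
                               free := free s - {x, y},
                               nart := Suc (nart s)\<rparr>)
              else
                return_pmf (s\<lparr>allowed := (allowed s - {RS x}) \<union>
                                    {RS (fst y, i) | i. i < D (fst y) \<and> i \<noteq> snd y},
                               free := free s - {x, y},
                               realv := realv s \<union> {fst y}\<rparr>)))))
        \<le> ennreal (Phi n D T j s + \<delta>)" if a: "a \<in> allowed s" for a
  proof -
    obtain x where x: "a = RS x" "x \<in> free s" "fst x \<in> realv s" using a g unfolding good_def by blast
    define F where "F = free s - {x}"
    have finF: "finite F" using finf unfolding F_def by auto
    have cardF: "card F = card (free s) - 1" unfolding F_def using x finf by simp
    have "2*n \<le> card (free s) + 2*j" using g unfolding good_def by simp
    hence cF: "n \<le> card F" using nj cardF by linarith
    have Fne: "F \<noteq> {}" using cF nj finF by auto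
    define R where "R y = (if RS y \<in> allowed s then
                (s\<lparr>allowed := (allowed s - {RS x, RS y}) \<union> {AS (nart s)},
                               free := free s - {x, y},
                               nart := Suc (nart s)\<rparr>)
              else
                (s\<lparr>allowed := (allowed s - {RS x}) \<union>
                                    {RS (fst y, i) | i. i < D (fst y) \<and> i \<noteq> snd y},
                               free := free s - {x, y},
                               realv := realv s \<union> {fst y}\<rparr>))" for y
    have pt: "Phi n D T (Suc j) (R y) \<le> Phi n D T j s + (if RS y \<in> allowed s then 1 else 0)
                 + min 1 (real (D (fst y)) / T)" if y: "y \<in> F" for y
    proof (cases "RS y \<in> allowed s")
      case True
      have "0 \<le> min 1 (real (D (fst y)) / T)" using T by simp
      thus ?thesis using True Phi_le_1[of n D T "Suc j" "R y"] Phi_nonneg[OF T, of n D j s]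
        by simp
    next
      case False
      have yy: "y \<in> free s - {x}" using y F_def by auto
      have "good n D (Suc j) (R y)" "Es D (R y) = Es D s + D (fst y)"
        using good_step[OF g D2 _ yy False] x a False by (auto simp: R_def)
      hence "Phi n D T (Suc j) (R y) = min 1 ((Es D s + D (fst y)) / T)" unfolding Phi_def by simp
      also have "\<dots> \<le> min 1 (Es D s / T) + min 1 (real (D (fst y)) / T)"
        using T Es_nonneg[of D s] unfolding add_divide_distrib by (intro min_add_le) auto
      finally show ?thesis using Phij EsT T False by simp
    qed
    have s1: "(\<Sum>y\<in>F. Phi n D T (Suc j) (R y)) \<le>
          (\<Sum>y\<in>F. Phi n D T j s + (if RS y \<in> allowed s then 1 else 0) + min 1 (real (D (fst y)) / T))"
      by (rule sum_mono) (rule pt)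
    have c1: "(\<Sum>y\<in>F. (if RS y \<in> allowed s then 1 else 0::real)) \<le> T"
    proof -
      have "(\<Sum>y\<in>F. (if RS y \<in> allowed s then 1 else 0::real)) = real (card {y\<in>F. RS y \<in> allowed s})"
        using finF by (simp add: sum.If_cases Int_def)
      also have "card {y\<in>F. RS y \<in> allowed s} \<le> card (allowed s)"
      proof -
        have "card {y\<in>F. RS y \<in> allowed s} = card (RS ` {y\<in>F. RS y \<in> allowed s})"
          by (rule card_image[symmetric]) (auto simp: inj_on_def)
        also have "\<dots> \<le> card (allowed s)" by (rule card_mono[OF fina]) auto
        finally show ?thesis .
      qed
      hence "real (card {y\<in>F. RS y \<in> allowed s}) \<le> Es D s" using card_allowed_le[OF g] by linarith
      finally show ?thesis using EsT by linarith
    qed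
    have c2: "(\<Sum>y\<in>F. min 1 (real (D (fst y)) / T)) \<le> Qs n D T"
    proof -
      have "F \<subseteq> all_stubs n D" using g unfolding F_def good_def by auto
      hence "(\<Sum>y\<in>F. min 1 (real (D (fst y)) / T)) \<le> (\<Sum>y\<in>all_stubs n D. min 1 (real (D (fst y)) / T))"
        by (intro sum_mono2 finite_all_stubs) (use T in auto)
      also have "\<dots> = (\<Sum>v\<in>{1..n}. \<Sum>i\<in>{..<D v}. min 1 (real (D v) / T))"
        unfolding all_stubs_Sigma by (subst sum.Sigma) (auto simp: case_prod_unfold)
      also have "\<dots> = Qs n D T" unfolding Qs_def by (simp add: mult.commute)
      finally show ?thesis .
    qed
    have sumb: "(\<Sum>y\<in>F. Phi n D T (Suc j) (R y)) \<le> card F * Phi n D T j s + T + Qs n D T"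
      using s1 c1 c2 by (simp add: sum.distrib)
    have npos: "0 < n" using nj by simp
    have "(\<Sum>y\<in>F. Phi n D T (Suc j) (R y)) / card F \<le> (card F * Phi n D T j s + T + Qs n D T) / card F"
      using sumb cF npos by (intro divide_right_mono) auto
    also have "\<dots> = Phi n D T j s + (T + Qs n D T) / card F" using cF npos by (simp add: field_simps)
    also have "(T + Qs n D T) / card F \<le> (T + Qs n D T) / n"
      using cF npos T Qs_nonneg[OF T] by (intro divide_left_mono) auto
    finally have avg: "(\<Sum>y\<in>F. Phi n D T (Suc j) (R y)) / card F \<le> Phi n D T j s + \<delta>"
      unfolding \<delta>_def by simp
    have "(\<integral>\<^sup>+t. ennreal (Phi n D T (Suc j) t) \<partial>measure_pmf (bind_pmf (pmf_of_set F) (\<lambda>y. return_pmf (R y))))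
          = (\<Sum>y\<in>F. ennreal (Phi n D T (Suc j) (R y))) / card F"
      using Fne finF by (simp add: nn_integral_pmf_of_set)
    also have "\<dots> = ennreal ((\<Sum>y\<in>F. Phi n D T (Suc j) (R y)) / card F)"
      using Phi_nonneg[OF T] cF npos
      by (simp add: ennreal_of_nat_eq_real_of_nat divide_ennreal sum_nonneg)
    also have "\<dots> \<le> ennreal (Phi n D T j s + \<delta>)" using avg by (simp add: ennreal_leI)
    finally have "(\<integral>\<^sup>+t. ennreal (Phi n D T (Suc j) t) \<partial>measure_pmf (bind_pmf (pmf_of_set F) (\<lambda>y. return_pmf (R y))))
          \<le> ennreal (Phi n D T j s + \<delta>)" .
    moreover have "free s - {x} \<noteq> {}" using Fne F_def by simp
    moreover have "(\<lambda>y. return_pmf (R y)) = (\<lambda>y.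
              if RS y \<in> allowed s then
                return_pmf (s\<lparr>allowed := (allowed s - {RS x, RS y}) \<union> {AS (nart s)},
                               free := free s - {x, y},
                               nart := Suc (nart s)\<rparr>)
              else
                return_pmf (s\<lparr>allowed := (allowed s - {RS x}) \<union>
                                    {RS (fst y, i) | i. i < D (fst y) \<and> i \<noteq> snd y},
                               free := free s - {x, y},
                               realv := realv s \<union> {fst y}\<rparr>))"
      unfolding R_def by (auto intro!: ext)
    ultimately show ?thesis using x(1) unfolding F_def by simp
  qed
  show ?thesis
    unfolding swg_step_def using ne fina
    apply (simp only: if_False nn_integral_bind_pmf)
    apply (rule nn_integral_le_const_pmf)
    using inner unfolding \<delta>_def by simp
qed



lemma path_len: "xs \<in> set_pmf (swg_path n D k) \<Longrightarrow> length xs = Suc k"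
  by (induction k arbitrary: xs) auto

lemma path_last: "xs \<in> set_pmf (swg_path n D k) \<Longrightarrow> xs ! k = last xs"
  using path_len[of xs n D k] by (metis diff_Suc_1 last_conv_nth list.size(3) nat.simps(3))

lemma path_bound:
  assumes D2: "\<forall>v\<in>{1..n}. 2 \<le> D v" and T: "0 < T" and nk: "2*k \<le> n"
  shows "(\<integral>\<^sup>+xs. ennreal (Phi n D T k (last xs)) \<partial>swg_path n D k)
           \<le> ennreal (Phi n D T 0 (swg_init n D) + real k * ((T + Qs n D T)/n))"
  using nk
proof (induction k)
  case 0
  show ?case using Phi_nonneg[OF T] by simp
next
  case (Suc k)
  define \<delta> where "\<delta> = (T + Qs n D T)/n"
  have d0: "0 \<le> \<delta>" unfolding \<delta>_def using Qs_nonneg[OF T] T by auto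
  have "(\<integral>\<^sup>+xs. ennreal (Phi n D T (Suc k) (last xs)) \<partial>swg_path n D (Suc k))
      = (\<integral>\<^sup>+xs. (\<integral>\<^sup>+s. ennreal (Phi n D T (Suc k) s) \<partial>swg_step D (last xs)) \<partial>swg_path n D k)"
    by simp
  also have "\<dots> \<le> (\<integral>\<^sup>+xs. ennreal (Phi n D T k (last xs)) + ennreal \<delta> \<partial>swg_path n D k)"
  proof (rule nn_integral_mono)
    fix xs
    have "(\<integral>\<^sup>+s. ennreal (Phi n D T (Suc k) s) \<partial>swg_step D (last xs)) \<le> ennreal (Phi n D T k (last xs) + \<delta>)"
      unfolding \<delta>_def by (rule step_bound[OF D2 T]) (use Suc.prems in simp)
    also have "\<dots> = ennreal (Phi n D T k (last xs)) + ennreal \<delta>"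
      using Phi_nonneg[OF T] d0 by (simp add: ennreal_plus)
    finally show "(\<integral>\<^sup>+s. ennreal (Phi n D T (Suc k) s) \<partial>swg_step D (last xs)) \<le> ennreal (Phi n D T k (last xs)) + ennreal \<delta>" .
  qed
  also have "\<dots> = (\<integral>\<^sup>+xs. ennreal (Phi n D T k (last xs)) \<partial>swg_path n D k) + ennreal \<delta>"
    by (subst nn_integral_add) auto
  also have "\<dots> \<le> ennreal (Phi n D T 0 (swg_init n D) + real k * \<delta>) + ennreal \<delta>"
    using Suc.IH Suc.prems unfolding \<delta>_def by (intro add_right_mono) simp
  also have "\<dots> = ennreal (Phi n D T 0 (swg_init n D) + real (Suc k) * \<delta>)"
    using Phi_nonneg[OF T] d0 by (simp add: ennreal_plus[symmetric] algebra_simps del: ennreal_plus)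
  finally show ?case unfolding \<delta>_def .
qed

lemma good_init:
  assumes D2: "\<forall>v\<in>{1..n}. 2 \<le> D v" and n: "1 \<le> n"
  shows "good n D 0 (swg_init n D)"
proof -
  have "2*n = (\<Sum>v\<in>{1..n}. 2::nat)" by simp
  also have "\<dots> \<le> (\<Sum>v\<in>{1..n}. D v)" by (rule sum_mono) (use D2 in auto)
  finally have c: "2*n \<le> card (all_stubs n D)" by (simp add: card_all_stubs)
  have d1: "2 \<le> D 1" using D2 n by auto
  have f: "allowed (swg_init n D) = {RS (1, i) | i. i < D 1}" "free (swg_init n D) = all_stubs n D"
    "realv (swg_init n D) = {1}" "nart (swg_init n D) = 0" by (simp_all add: swg_init_def)
  show ?thesis unfolding good_def f
  proof (intro conjI)
    show "{1} \<subseteq> {1..n}" using n by simp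
    show "2*n \<le> card (all_stubs n D) + 2*0" using c by simp
    show "{RS (1, i) |i. i < D 1} \<subseteq> RS ` {z \<in> all_stubs n D. fst z \<in> {1}}"
      using n by (auto simp: all_stubs_def)
    show "{RS (1, i) |i. i < D 1} \<noteq> {}" using d1 by (auto intro!: exI[of _ 0])
    show "\<forall>z\<in>all_stubs n D. RS z \<notin> {RS (1, i) |i. i < D 1} \<longrightarrow> fst z \<notin> {1}"
      by (auto simp: all_stubs_def)
  qed auto
qed

lemma inner_final:
  assumes D2: "\<forall>v\<in>{1..n}. 2 \<le> D v" and T: "0 < T" and nk: "2*m \<le> n" and n: "1 \<le> n"
  shows "emeasure (swg_path n D m) {xs. R_gt m xs} \<le> ennreal (real (D 1)/T + real m * ((T + Qs n D T)/n))"
proof -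
  have "emeasure (swg_path n D m) {xs. R_gt m xs} = (\<integral>\<^sup>+xs. indicator {xs. R_gt m xs} xs \<partial>swg_path n D m)"
    by simp
  also have "\<dots> \<le> (\<integral>\<^sup>+xs. ennreal (Phi n D T m (last xs)) \<partial>swg_path n D m)"
  proof (rule nn_integral_mono_AE)
    show "AE xs in measure_pmf (swg_path n D m). indicator {xs. R_gt m xs} xs \<le> ennreal (Phi n D T m (last xs))"
      unfolding AE_measure_pmf_iff
    proof
      fix xs assume xs: "xs \<in> set_pmf (swg_path n D m)"
      show "indicator {xs. R_gt m xs} xs \<le> ennreal (Phi n D T m (last xs))"
      proof (cases "R_gt m xs")
        case True
        have "\<not> good n D m (last xs)"
        proof
          assume "good n D m (last xs)"
          hence "card (realv (xs ! m)) = m + 1" using path_last[OF xs] unfolding good_def by simp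
          thus False using True unfolding R_gt_def by auto
        qed
        thus ?thesis using True unfolding Phi_def by simp
      qed simp
    qed
  qed
  also have "\<dots> \<le> ennreal (Phi n D T 0 (swg_init n D) + real m * ((T + Qs n D T)/n))"
    by (rule path_bound[OF D2 T nk])
  also have "Phi n D T 0 (swg_init n D) \<le> real (D 1)/T"
    using good_init[OF D2 n] unfolding Phi_def Es_def by (simp add: swg_init_def)
  hence "ennreal (Phi n D T 0 (swg_init n D) + real m * ((T + Qs n D T)/n)) \<le> ennreal (real (D 1)/T + real m * ((T + Qs n D T)/n))"
    by (intro ennreal_leI) simp
  finally show ?thesis .
qed



lemma mvt_powr:
  fixes x e :: real
  assumes x: "1 \<le> x"
  shows "\<exists>z. x < z \<and> z < x + 1 \<and> (x+1) powr e - x powr e = e * z powr (e - 1)"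
proof -
  have "\<exists>z::real. x < z \<and> z < x + 1 \<and> ((\<lambda>t. t powr e) (x+1) - (\<lambda>t. t powr e) x = ((x+1) - x) * (e * z powr (e - 1)))"
    by (rule MVT2) (use x in \<open>auto intro!: has_real_derivative_powr\<close>)
  thus ?thesis by auto
qed

lemma step_pos:
  fixes x e :: real
  assumes x: "1 \<le> x" and e: "0 < e" "e < 1"
  shows "e * (x+1) powr (e - 1) \<le> (x+1) powr e - x powr e"
proof -
  obtain z where z: "x < z" "z < x + 1" "(x+1) powr e - x powr e = e * z powr (e - 1)"
    using mvt_powr[OF x] by blast
  have "(x+1) powr (e - 1) \<le> z powr (e - 1)" by (rule powr_mono2') (use z x e in auto)
  thus ?thesis using z e by (simp add: mult_left_mono)
qed

lemma step_neg:
  fixes x b :: real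
  assumes x: "1 \<le> x" and b: "0 < b"
  shows "b * (x+1) powr (-b - 1) \<le> x powr (-b) - (x+1) powr (-b)"
proof -
  obtain z where z: "x < z" "z < x + 1" "(x+1) powr (-b) - x powr (-b) = (-b) * z powr (-b - 1)"
    using mvt_powr[OF x] by blast
  have "(x+1) powr (-b - 1) \<le> z powr (-b - 1)" by (rule powr_mono2') (use z x b in auto)
  hence "b * (x+1) powr (-b - 1) \<le> b * z powr (-b - 1)" using b by (simp add: mult_left_mono)
  thus ?thesis using z(3) by linarith
qed

lemma powr_head:
  assumes a: "0 < a" "a < 1"
  shows "(\<Sum>j\<in>{1..N}. real j powr (a - 1)) \<le> 1 + real N powr a / a"
proof (induction N)
  case 0 thus ?case using a by simp
next
  case (Suc N)
  show ?case
  proof (cases "N = 0")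
    case True thus ?thesis using a by simp
  next
    case False
    have "(\<Sum>j\<in>{1..Suc N}. real j powr (a - 1)) = (\<Sum>j\<in>{1..N}. real j powr (a - 1)) + real (Suc N) powr (a - 1)"
      by simp
    also have "\<dots> \<le> 1 + real N powr a / a + ((real N + 1) powr a - real N powr a) / a"
    proof -
      have "a * (real N + 1) powr (a - 1) \<le> (real N + 1) powr a - real N powr a"
        by (rule step_pos) (use False a in auto)
      hence "real (Suc N) powr (a - 1) \<le> ((real N + 1) powr a - real N powr a) / a"
        using a by (simp add: field_simps add.commute)
      thus ?thesis using Suc.IH by linarith
    qed
    also have "\<dots> = 1 + real (Suc N) powr a / a" using a by (simp add: field_simps add.commute)
    finally show ?thesis .
  qed
qed

lemma powr_tail:
  assumes b: "0 < b" and N: "1 \<le> N"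
  shows "(\<Sum>j\<in>{N<..M}. real j powr (-b - 1)) \<le> real N powr (-b) / b - real (max N M) powr (-b) / b"
proof (induction M)
  case 0 thus ?case using N by (simp add: max_def)
next
  case (Suc M)
  show ?case
  proof (cases "Suc M \<le> N")
    case True thus ?thesis by (simp add: max_def)
  next
    case False
    hence MN: "N \<le> M" by simp
    have "(\<Sum>j\<in>{N<..Suc M}. real j powr (-b - 1)) = (\<Sum>j\<in>{N<..M}. real j powr (-b - 1)) + real (Suc M) powr (-b - 1)"
    proof -
      have "{N<..Suc M} = insert (Suc M) {N<..M}" using MN by auto
      thus ?thesis by simp
    qed
    also have "\<dots> \<le> real N powr (-b) / b - real M powr (-b) / b + (real M powr (-b) - (real M + 1) powr (-b)) / b"
    proof -
      have "b * (real M + 1) powr (-b - 1) \<le> real M powr (-b) - (real M + 1) powr (-b)"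
        by (rule step_neg) (use MN N b in auto)
      hence "real (Suc M) powr (-b - 1) \<le> (real M powr (-b) - (real M + 1) powr (-b)) / b"
        using b by (simp add: field_simps add.commute)
      thus ?thesis using Suc.IH MN by (simp add: max_def)
    qed
    also have "\<dots> = real N powr (-b) / b - real (max N (Suc M)) powr (-b) / b"
      using b MN by (simp add: field_simps add.commute max_def)
    finally show ?thesis .
  qed
qed

lemma powr_tail':
  assumes b: "0 < b" and N: "1 \<le> N"
  shows "(\<Sum>j\<in>{N<..M}. real j powr (-b - 1)) \<le> real N powr (-b) / b"
  using powr_tail[OF b N, of M] b by (smt (verit) divide_nonneg_nonneg powr_ge_zero)

lemma ennreal_suminf_bound:
  fixes f :: "nat \<Rightarrow> real"
  assumes "\<And>i. 0 \<le> f i" "\<And>K. (\<Sum>i<K. f i) \<le> B"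
  shows "(\<Sum>i. ennreal (f i)) \<le> ennreal B"
  unfolding suminf_eq_SUP
proof (rule SUP_least)
  fix K
  show "(\<Sum>i<K. ennreal (f i)) \<le> ennreal B" using assms by (simp add: ennreal_leI)
qed

lemma layer_cake:
  fixes h :: "nat \<Rightarrow> real"
  assumes mono: "\<And>j. h j \<le> h (Suc j)" and h0: "h 0 = 0"
  shows "(\<integral>\<^sup>+d. ennreal (h d) \<partial>measure_pmf p) = (\<Sum>j. ennreal (h (Suc j) - h j) * emeasure (measure_pmf p) {d. j < d})"
proof -
  have eq: "ennreal (h d) = (\<Sum>j. ennreal (h (Suc j) - h j) * indicator {d. j < d} d)" for d
  proof -
    have "(\<Sum>j. ennreal (h (Suc j) - h j) * indicator {d. j < d} d) = (\<Sum>j<d. ennreal (h (Suc j) - h j) * indicator {d. j < d} d)"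
      by (rule suminf_finite) auto
    also have "\<dots> = (\<Sum>j<d. ennreal (h (Suc j) - h j))" by (intro sum.cong) auto
    also have "\<dots> = ennreal (\<Sum>j<d. h (Suc j) - h j)" using mono by (simp add: sum_nonneg)
    also have "\<dots> = ennreal (h d)" by (simp add: sum_lessThan_telescope h0)
    finally show ?thesis by simp
  qed
  have "(\<integral>\<^sup>+d. ennreal (h d) \<partial>measure_pmf p) = (\<integral>\<^sup>+d. (\<Sum>j. ennreal (h (Suc j) - h j) * indicator {d. j < d} d) \<partial>measure_pmf p)"
    by (simp only: eq)
  also have "\<dots> = (\<Sum>j. \<integral>\<^sup>+d. ennreal (h (Suc j) - h j) * indicator {d. j < d} d \<partial>measure_pmf p)"
    by (rule nn_integral_suminf) simp
  also have "\<dots> = (\<Sum>j. ennreal (h (Suc j) - h j) * emeasure (measure_pmf p) {d. j < d})"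
    by (subst nn_integral_cmult_indicator) auto
  finally show ?thesis .
qed



definition gf :: "real \<Rightarrow> nat \<Rightarrow> real" where
  "gf T d = real d * min 1 (real d / T)"

lemma gf_incr_real:
  fixes x T :: real
  assumes x: "0 \<le> x" and T: "0 < T"
  shows "0 \<le> (x+1) * min 1 ((x+1)/T) - x * min 1 (x/T)"
    "(x+1) * min 1 ((x+1)/T) - x * min 1 (x/T) \<le> 2"
    "(x+1) * min 1 ((x+1)/T) - x * min 1 (x/T) \<le> (2*x+1)/T"
proof -
  consider (a) "x + 1 \<le> T" | (b) "T \<le> x" | (c) "x < T" "T < x + 1" by linarith
  hence "0 \<le> (x+1) * min 1 ((x+1)/T) - x * min 1 (x/T) \<and>
    (x+1) * min 1 ((x+1)/T) - x * min 1 (x/T) \<le> 2 \<and>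
    (x+1) * min 1 ((x+1)/T) - x * min 1 (x/T) \<le> (2*x+1)/T"
  proof cases
    case a
    have m1: "min 1 ((x+1)/T) = (x+1)/T" using a T by (simp add: min_def field_simps)
    have m2: "min 1 (x/T) = x/T" using a T by (simp add: min_def field_simps)
    have e: "(x+1) * ((x+1)/T) - x * (x/T) = (2*x+1)/T" using T by (simp add: field_simps power2_eq_square)
    have "(2*x+1)/T \<le> 2" using a T by (simp add: field_simps)
    moreover have "0 \<le> (2*x+1)/T" using x T by simp
    ultimately show ?thesis unfolding m1 m2 e by simp
  next
    case b
    have m1: "min 1 ((x+1)/T) = 1" using b T by (simp add: min_def field_simps)
    have m2: "min 1 (x/T) = 1" using b T by (simp add: min_def field_simps)
    have "1 \<le> (2*x+1)/T" using b T x by (simp add: field_simps)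
    thus ?thesis unfolding m1 m2 by simp
  next
    case c
    have m1: "min 1 ((x+1)/T) = 1" using c T by (simp add: min_def field_simps)
    have m2: "min 1 (x/T) = x/T" using c T by (simp add: min_def field_simps)
    have "x * x \<le> T * x" using c x by (intro mult_right_mono) auto
    hence xx: "x * (x/T) \<le> x" using c x T by (simp add: field_simps)
    have e1: "(x+1) - x*(x/T) \<le> (2*x+1)/T"
    proof -
      have "(x+1)*T \<le> (x+1)*(x+1)" using c x by (intro mult_left_mono) auto
      hence h: "(x+1)*T - x*x \<le> 2*x+1" by (simp add: algebra_simps)
      have "(x+1) - x*(x/T) = ((x+1)*T - x*x)/T" using T by (simp add: field_simps)
      also have "\<dots> \<le> (2*x+1)/T" using h T by (intro divide_right_mono) auto
      finally show ?thesis .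
    qed
    have e2: "(x+1) - x*(x/T) \<le> 2"
    proof -
      have "x * (x/(x+1)) \<le> x * (x/T)" using c x T by (intro mult_left_mono divide_left_mono) auto
      moreover have "(x+1) - x*(x/(x+1)) \<le> 2" using x by (simp add: field_simps)
      ultimately show ?thesis by linarith
    qed
    show ?thesis unfolding m1 m2 using xx e1 e2 by simp
  qed
  thus "0 \<le> (x+1) * min 1 ((x+1)/T) - x * min 1 (x/T)"
    "(x+1) * min 1 ((x+1)/T) - x * min 1 (x/T) \<le> 2"
    "(x+1) * min 1 ((x+1)/T) - x * min 1 (x/T) \<le> (2*x+1)/T" by auto
qed

lemma gf_incr:
  assumes T: "0 < T"
  shows "0 \<le> gf T (Suc d) - gf T d" "gf T (Suc d) - gf T d \<le> 2" "gf T (Suc d) - gf T d \<le> (2 * real d + 1)/T"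
  using gf_incr_real[of "real d" T] T unfolding gf_def by (auto simp: add.commute)

lemma gf0: "gf T 0 = 0" unfolding gf_def by simp

lemma layer_bound:
  fixes h :: "nat \<Rightarrow> real"
  assumes mono: "\<And>j. h j \<le> h (Suc j)" and h0: "h 0 = 0"
    and tv: "\<And>j. (h (Suc j) - h j) * measure_pmf.prob p {d. j < d} \<le> v j"
    and vB: "\<And>K. (\<Sum>j<K. v j) \<le> B"
  shows "(\<integral>\<^sup>+d. ennreal (h d) \<partial>measure_pmf p) \<le> ennreal B"
proof -
  have v0: "0 \<le> v j" for j using tv[of j] mono[of j] by (smt (verit) measure_nonneg mult_nonneg_nonneg)
  have "(\<integral>\<^sup>+d. ennreal (h d) \<partial>measure_pmf p) = (\<Sum>j. ennreal (h (Suc j) - h j) * emeasure (measure_pmf p) {d. j < d})"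
    by (rule layer_cake[OF mono h0])
  also have "\<dots> \<le> (\<Sum>j. ennreal (v j))"
  proof (rule suminf_le)
    fix j
    have "ennreal (h (Suc j) - h j) * emeasure (measure_pmf p) {d. j < d}
       = ennreal ((h (Suc j) - h j) * measure_pmf.prob p {d. j < d})"
      using mono[of j] by (simp add: measure_pmf.emeasure_eq_measure ennreal_mult)
    also have "\<dots> \<le> ennreal (v j)" using tv[of j] by (rule ennreal_leI)
    finally show "ennreal (h (Suc j) - h j) * emeasure (measure_pmf p) {d. j < d} \<le> ennreal (v j)" .
  qed auto
  also have "\<dots> \<le> ennreal B" by (rule ennreal_suminf_bound) (use v0 vB in auto)
  finally show ?thesis .
qed

lemma sum_if_le:
  fixes f :: "nat \<Rightarrow> real"
  assumes "\<And>j. 0 \<le> f j" "finite S" "\<And>j. j < K \<Longrightarrow> P j \<Longrightarrow> j \<in> S"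
  shows "(\<Sum>j<K. if P j then f j else 0) \<le> (\<Sum>j\<in>S. f j)"
proof -
  have "(\<Sum>j<K. if P j then f j else 0) = (\<Sum>j\<in>{..<K} \<inter> {j. P j}. f j)"
    by (simp add: sum.If_cases)
  also have "\<dots> \<le> (\<Sum>j\<in>S. f j)" by (rule sum_mono2) (use assms in auto)
  finally show ?thesis .
qed



lemma j_powr: "1 \<le> j \<Longrightarrow> real j * real j powr (-(\<tau>-1)) = real j powr (2 - \<tau>)"
proof -
  assume j: "1 \<le> j"
  have "real j * real j powr (-(\<tau>-1)) = real j powr 1 * real j powr (-(\<tau>-1))" using j by simp
  also have "\<dots> = real j powr (1 + (-(\<tau>-1)))" using j by (subst powr_add) simp
  also have "1 + (-(\<tau>-1)) = 2 - \<tau>" by simp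
  finally show ?thesis .
qed

lemma E1:
  assumes tail: "\<forall>j::nat. 1 \<le> j \<longrightarrow> measure_pmf.prob p {d. j < d} \<le> c * real j powr (-(\<tau>-1))"
    and c: "0 < c" and tau: "2 < \<tau>"
  shows "(\<integral>\<^sup>+d. ennreal (real d) \<partial>measure_pmf p) \<le> ennreal (1 + c + c/(\<tau>-2))"
proof (rule layer_bound[where v="\<lambda>j. (if j = 0 then 1 else 0) + (if j = 1 then c else 0) + (if 1 < j then c * real j powr (-(\<tau>-2)-1) else 0)"])
  fix j :: nat
  show "(real (Suc j) - real j) * measure_pmf.prob p {d. j < d} \<le> (if j = 0 then 1 else 0) + (if j = 1 then c else 0) + (if 1 < j then c * real j powr (-(\<tau>-2)-1) else 0)"
  proof -
    consider "j = 0" | "j = 1" | "1 < j" by linarith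
    thus ?thesis
    proof cases
      case 1 thus ?thesis by simp
    next
      case 2 thus ?thesis using tail by auto
    next
      case 3 thus ?thesis using tail by (auto simp: algebra_simps)
    qed
  qed
next
  fix K :: nat
  have s1: "(\<Sum>j<K. if j = 0 then 1 else 0::real) \<le> (\<Sum>j\<in>{0::nat}. 1)" by (induction K) auto
  have s2: "(\<Sum>j<K. if j = 1 then c else 0::real) \<le> (\<Sum>j\<in>{1::nat}. c)" by (rule sum_if_le[where f="\<lambda>_. c"]) (use c in auto)
  have s3: "(\<Sum>j<K. if 1 < j then c * real j powr (-(\<tau>-2)-1) else 0) \<le> (\<Sum>j\<in>{1<..K}. c * real j powr (-(\<tau>-2)-1))"
    by (rule sum_if_le) (use c in auto)
  also have "\<dots> = c * (\<Sum>j\<in>{1<..K}. real j powr (-(\<tau>-2)-1))" by (simp add: sum_distrib_left)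
  also have "\<dots> \<le> c * (real 1 powr (-(\<tau>-2)) / (\<tau>-2))"
    by (intro mult_left_mono powr_tail') (use c tau in auto)
  finally have s3': "(\<Sum>j<K. if 1 < j then c * real j powr (-(\<tau>-2)-1) else 0) \<le> c/(\<tau>-2)" by simp
  show "(\<Sum>j<K. (if j = 0 then 1 else 0) + (if j = 1 then c else 0) + (if 1 < j then c * real j powr (-(\<tau>-2)-1) else 0)) \<le> 1 + c + c/(\<tau>-2)"
    using s1 s2 s3' by (simp add: sum.distrib)
qed auto

lemma E2:
  assumes tail: "\<forall>j::nat. 1 \<le> j \<longrightarrow> measure_pmf.prob p {d. j < d} \<le> c * real j powr (-(\<tau>-1))"
    and c: "0 < c" and tau: "3 < \<tau>" and T: "0 < T"
  shows "(\<integral>\<^sup>+d. ennreal (gf T d) \<partial>measure_pmf p) \<le> ennreal ((1 + 3*c + 3*c/(\<tau>-3)) / T)"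
proof (rule layer_bound[where v="\<lambda>j. (if j = 0 then 1/T else 0) + (if j = 1 then 3*c/T else 0) + (if 1 < j then 3*c/T * real j powr (-(\<tau>-3)-1) else 0)"])
  fix j :: nat
  have w0: "0 \<le> gf T (Suc j) - gf T j" and w1: "gf T (Suc j) - gf T j \<le> (2 * real j + 1)/T"
    using gf_incr[OF T] by auto
  show "(gf T (Suc j) - gf T j) * measure_pmf.prob p {d. j < d} \<le> (if j = 0 then 1/T else 0) + (if j = 1 then 3*c/T else 0) + (if 1 < j then 3*c/T * real j powr (-(\<tau>-3)-1) else 0)"
  proof (cases "j = 0")
    case True
    have "(gf T (Suc j) - gf T j) * measure_pmf.prob p {d. j < d} \<le> (gf T (Suc j) - gf T j) * 1"
      using w0 by (intro mult_left_mono) auto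
    thus ?thesis using w1 True by simp
  next
    case False
    hence j1: "1 \<le> j" by simp
    have "(gf T (Suc j) - gf T j) * measure_pmf.prob p {d. j < d} \<le> (3 * real j / T) * (c * real j powr (-(\<tau>-1)))"
    proof (intro mult_mono w0)
      show "gf T (Suc j) - gf T j \<le> 3 * real j / T" using w1 j1 T by (smt (verit) divide_right_mono of_nat_1 of_nat_mono)
      show "measure_pmf.prob p {d. j < d} \<le> c * real j powr (-(\<tau>-1))" using tail j1 by auto
    qed (use T c in auto)
    also have "\<dots> = 3*c/T * (real j * real j powr (-(\<tau>-1)))" by (simp add: field_simps)
    also have "\<dots> = 3*c/T * real j powr (-(\<tau>-3)-1)" using j_powr[OF j1, of \<tau>] by (simp add: algebra_simps)
    finally show ?thesis using j1 by (cases "j = 1") auto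
  qed
next
  fix K :: nat
  have s1: "(\<Sum>j<K. if j = 0 then 1/T else 0::real) \<le> (\<Sum>j\<in>{0::nat}. 1/T)" using T by (induction K) auto
  have s2: "(\<Sum>j<K. if j = 1 then 3*c/T else 0::real) \<le> (\<Sum>j\<in>{1::nat}. 3*c/T)" by (rule sum_if_le[where f="\<lambda>_. 3*c/T"]) (use c T in auto)
  have s3: "(\<Sum>j<K. if 1 < j then 3*c/T * real j powr (-(\<tau>-3)-1) else 0) \<le> (\<Sum>j\<in>{1<..K}. 3*c/T * real j powr (-(\<tau>-3)-1))"
    by (rule sum_if_le) (use c T in auto)
  also have "\<dots> = 3*c/T * (\<Sum>j\<in>{1<..K}. real j powr (-(\<tau>-3)-1))" by (simp add: sum_distrib_left)
  also have "\<dots> \<le> 3*c/T * (real 1 powr (-(\<tau>-3)) / (\<tau>-3))"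
    by (intro mult_left_mono powr_tail') (use c tau T in auto)
  finally have s3': "(\<Sum>j<K. if 1 < j then 3*c/T * real j powr (-(\<tau>-3)-1) else 0) \<le> 3*c/T/(\<tau>-3)" by simp
  have "(\<Sum>j<K. (if j = 0 then 1/T else 0) + (if j = 1 then 3*c/T else 0) + (if 1 < j then 3*c/T * real j powr (-(\<tau>-3)-1) else 0))
     \<le> 1/T + 3*c/T + 3*c/T/(\<tau>-3)"
    using s1 s2 s3' by (simp add: sum.distrib)
  also have "\<dots> = (1 + 3*c + 3*c/(\<tau>-3)) / T" using T tau by (simp add: field_simps)
  finally show "(\<Sum>j<K. (if j = 0 then 1/T else 0) + (if j = 1 then 3*c/T else 0) + (if 1 < j then 3*c/T * real j powr (-(\<tau>-3)-1) else 0))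
     \<le> (1 + 3*c + 3*c/(\<tau>-3)) / T" .
qed (use gf_incr[OF T] gf0 in auto)



lemma E3_final:
  fixes T c \<tau> :: real and N :: nat
  assumes T: "1 \<le> T" and c: "0 < c" and tau: "2 < \<tau>" "\<tau> < 3"
    and N: "1 \<le> N" "real N \<le> T" "T \<le> 2 * real N"
  shows "1/T + 3*c/T * (1 + real N powr (3-\<tau>) / (3-\<tau>)) + 2*c * (real N powr (-(\<tau>-2)) / (\<tau>-2))
     \<le> (1 + 3*c + 3*c/(3-\<tau>) + 4*c/(\<tau>-2)) * T powr (2-\<tau>)"
proof -
  define P where "P = T powr (2-\<tau>)"
  have P0: "0 \<le> P" unfolding P_def by simp
  have a: "1/T \<le> P"
  proof -
    have "1/T = T powr (-1)" using T by (simp add: powr_minus_divide)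
    also have "\<dots> \<le> P" unfolding P_def by (rule powr_mono) (use T tau in auto)
    finally show ?thesis .
  qed
  have b: "3*c/T \<le> 3*c*P" using a c by (simp add: mult_left_mono divide_inverse) 
  have cc: "3*c/T * (real N powr (3-\<tau>) / (3-\<tau>)) \<le> 3*c/(3-\<tau>) * P"
  proof -
    have "real N powr (3-\<tau>) \<le> T powr (3-\<tau>)" by (rule powr_mono2) (use N tau in auto)
    hence 1: "3*c/T * (real N powr (3-\<tau>) / (3-\<tau>)) \<le> 3*c/T * (T powr (3-\<tau>) / (3-\<tau>))"
      using c T tau by (intro mult_left_mono divide_right_mono) auto
    have eqP: "T powr (3-\<tau>) / T = P"
    proof -
      have "T powr (3-\<tau>) / T = T powr (3-\<tau>) / T powr 1" using T by simp
      also have "\<dots> = T powr ((3-\<tau>) - 1)" by (rule powr_diff[symmetric])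
      finally show ?thesis unfolding P_def by (simp add: algebra_simps)
    qed
    have 2: "3*c/T * (T powr (3-\<tau>) / (3-\<tau>)) = 3*c/(3-\<tau>) * (T powr (3-\<tau>) / T)"
      by (simp add: divide_inverse mult_ac)
    show ?thesis using 1 2 eqP by simp
  qed
  have d: "2*c * (real N powr (-(\<tau>-2)) / (\<tau>-2)) \<le> 4*c/(\<tau>-2) * P"
  proof -
    have "real N powr (-(\<tau>-2)) \<le> (T/2) powr (-(\<tau>-2))" by (rule powr_mono2') (use N T tau in auto)
    also have "(T/2) powr (-(\<tau>-2)) = T powr (-(\<tau>-2)) * 2 powr (\<tau>-2)"
    proof -
      have "(T/2) powr (-(\<tau>-2)) = T powr (-(\<tau>-2)) / 2 powr (-(\<tau>-2))" by (rule powr_divide)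
      also have "(2::real) powr (-(\<tau>-2)) = inverse (2 powr (\<tau>-2))" by (rule powr_minus)
      finally show ?thesis by (simp only: divide_inverse inverse_inverse_eq)
    qed
    also have "T powr (-(\<tau>-2)) * 2 powr (\<tau>-2) \<le> 2 * P"
    proof -
      have "2 powr (\<tau>-2) \<le> (2::real) powr 1" by (rule powr_mono) (use tau in auto)
      hence "(2::real) powr (\<tau>-2) \<le> 2" by simp
      hence "T powr (-(\<tau>-2)) * 2 powr (\<tau>-2) \<le> T powr (-(\<tau>-2)) * 2" by (rule mult_left_mono) simp
      moreover have "-(\<tau>-2) = 2 - \<tau>" by simp
      ultimately show ?thesis unfolding P_def by (simp only: mult.commute)
    qed
    finally have "real N powr (-(\<tau>-2)) \<le> 2 * P" .
    hence "2*c * (real N powr (-(\<tau>-2)) / (\<tau>-2)) \<le> 2*c * (2*P / (\<tau>-2))"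
      using c tau by (intro mult_left_mono divide_right_mono) auto
    thus ?thesis by (simp add: field_simps)
  qed
  have "1/T + 3*c/T * (1 + real N powr (3-\<tau>) / (3-\<tau>)) + 2*c * (real N powr (-(\<tau>-2)) / (\<tau>-2))
     = 1/T + 3*c/T + 3*c/T * (real N powr (3-\<tau>) / (3-\<tau>)) + 2*c * (real N powr (-(\<tau>-2)) / (\<tau>-2))"
    by (simp add: algebra_simps)
  also have "\<dots> \<le> P + 3*c*P + 3*c/(3-\<tau>) * P + 4*c/(\<tau>-2) * P" using a b cc d by linarith
  also have "\<dots> = (1 + 3*c + 3*c/(3-\<tau>) + 4*c/(\<tau>-2)) * T powr (2-\<tau>)" unfolding P_def by (simp add: algebra_simps)
  finally show ?thesis .
qed

lemma E3:
  assumes tail: "\<forall>j::nat. 1 \<le> j \<longrightarrow> measure_pmf.prob p {d. j < d} \<le> c * real j powr (-(\<tau>-1))"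
    and c: "0 < c" and tau: "2 < \<tau>" "\<tau> < 3" and T: "1 \<le> T"
  shows "(\<integral>\<^sup>+d. ennreal (gf T d) \<partial>measure_pmf p) \<le> ennreal ((1 + 3*c + 3*c/(3-\<tau>) + 4*c/(\<tau>-2)) * T powr (2-\<tau>))"
proof -
  define N where "N = nat \<lfloor>T\<rfloor>"
  have N1: "1 \<le> N" unfolding N_def using T by linarith
  have N2: "real N \<le> T" unfolding N_def using T by linarith
  have N3: "T \<le> 2 * real N"
  proof -
    have "T < real_of_int \<lfloor>T\<rfloor> + 1" by linarith
    moreover have "1 \<le> \<lfloor>T\<rfloor>" using T by linarith
    moreover have "real N = real_of_int \<lfloor>T\<rfloor>" unfolding N_def using T by simp
    ultimately show ?thesis by linarith
  qed
  have T0: "0 < T" using T by simp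
  show ?thesis
  proof (rule layer_bound[where v="\<lambda>j. (if j = 0 then 1/T else 0) + (if 1 \<le> j \<and> j \<le> N then 3*c/T * real j powr ((3-\<tau>)-1) else 0) + (if N < j then 2*c * real j powr (-(\<tau>-2)-1) else 0)"])
    fix j :: nat
    have w0: "0 \<le> gf T (Suc j) - gf T j" and w1: "gf T (Suc j) - gf T j \<le> (2 * real j + 1)/T"
      and w2: "gf T (Suc j) - gf T j \<le> 2"
      using gf_incr[OF T0] by auto
    show "(gf T (Suc j) - gf T j) * measure_pmf.prob p {d. j < d} \<le> (if j = 0 then 1/T else 0) + (if 1 \<le> j \<and> j \<le> N then 3*c/T * real j powr ((3-\<tau>)-1) else 0) + (if N < j then 2*c * real j powr (-(\<tau>-2)-1) else 0)"
    proof (cases "j = 0")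
      case True
      have "(gf T (Suc j) - gf T j) * measure_pmf.prob p {d. j < d} \<le> (gf T (Suc j) - gf T j) * 1"
        using w0 by (intro mult_left_mono) auto
      thus ?thesis using w1 True N1 by simp
    next
      case False
      hence j1: "1 \<le> j" by simp
      have pr: "measure_pmf.prob p {d. j < d} \<le> c * real j powr (-(\<tau>-1))" using tail j1 by auto
      show ?thesis
      proof (cases "j \<le> N")
        case True
        have "(gf T (Suc j) - gf T j) * measure_pmf.prob p {d. j < d} \<le> (3 * real j / T) * (c * real j powr (-(\<tau>-1)))"
        proof -
          have "(2 * real j + 1) / T \<le> 3 * real j / T" using j1 T0 by (intro divide_right_mono) auto
          hence w3: "gf T (Suc j) - gf T j \<le> 3 * real j / T" using w1 by linarith
          show ?thesis by (rule mult_mono[OF w3 pr]) (use T0 in auto)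
        qed
        also have "\<dots> = 3*c/T * (real j * real j powr (-(\<tau>-1)))" by (simp add: divide_inverse mult_ac)
        also have "\<dots> = 3*c/T * real j powr ((3-\<tau>)-1)" using j_powr[OF j1, of \<tau>] by (simp add: algebra_simps)
        finally show ?thesis using j1 True by simp
      next
        case False
        have "(gf T (Suc j) - gf T j) * measure_pmf.prob p {d. j < d} \<le> 2 * (c * real j powr (-(\<tau>-1)))"
          by (rule mult_mono[OF w2 pr]) auto
        also have "\<dots> = 2*c * real j powr (-(\<tau>-2)-1)" by (simp add: algebra_simps)
        finally show ?thesis using j1 False by simp
      qed
    qed
  next
    fix K :: nat
    have s1: "(\<Sum>j<K. if j = 0 then 1/T else 0::real) \<le> 1/T" using T0 by (induction K) auto
    have s2: "(\<Sum>j<K. if 1 \<le> j \<and> j \<le> N then 3*c/T * real j powr ((3-\<tau>)-1) else 0) \<le> (\<Sum>j\<in>{1..N}. 3*c/T * real j powr ((3-\<tau>)-1))"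
      by (rule sum_if_le) (use c T0 in auto)
    also have "\<dots> = 3*c/T * (\<Sum>j\<in>{1..N}. real j powr ((3-\<tau>)-1))" by (simp add: sum_distrib_left)
    also have "\<dots> \<le> 3*c/T * (1 + real N powr (3-\<tau>) / (3-\<tau>))"
      by (intro mult_left_mono powr_head) (use c tau T0 in auto)
    finally have s2': "(\<Sum>j<K. if 1 \<le> j \<and> j \<le> N then 3*c/T * real j powr ((3-\<tau>)-1) else 0) \<le> 3*c/T * (1 + real N powr (3-\<tau>) / (3-\<tau>))" .
    have s3: "(\<Sum>j<K. if N < j then 2*c * real j powr (-(\<tau>-2)-1) else 0) \<le> (\<Sum>j\<in>{N<..K}. 2*c * real j powr (-(\<tau>-2)-1))"
      by (rule sum_if_le) (use c in auto)
    also have "\<dots> = 2*c * (\<Sum>j\<in>{N<..K}. real j powr (-(\<tau>-2)-1))" by (simp add: sum_distrib_left)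
    also have "\<dots> \<le> 2*c * (real N powr (-(\<tau>-2)) / (\<tau>-2))"
      by (intro mult_left_mono powr_tail') (use c tau N1 in auto)
    finally have s3': "(\<Sum>j<K. if N < j then 2*c * real j powr (-(\<tau>-2)-1) else 0) \<le> 2*c * (real N powr (-(\<tau>-2)) / (\<tau>-2))" .
    have "(\<Sum>j<K. (if j = 0 then 1/T else 0) + (if 1 \<le> j \<and> j \<le> N then 3*c/T * real j powr ((3-\<tau>)-1) else 0) + (if N < j then 2*c * real j powr (-(\<tau>-2)-1) else 0))
       \<le> 1/T + 3*c/T * (1 + real N powr (3-\<tau>) / (3-\<tau>)) + 2*c * (real N powr (-(\<tau>-2)) / (\<tau>-2))"
      using s1 s2' s3' by (simp add: sum.distrib)
    also have "\<dots> \<le> (1 + 3*c + 3*c/(3-\<tau>) + 4*c/(\<tau>-2)) * T powr (2-\<tau>)"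
      by (rule E3_final[OF T c tau N1 N2 N3])
    finally show "(\<Sum>j<K. (if j = 0 then 1/T else 0) + (if 1 \<le> j \<and> j \<le> N then 3*c/T * real j powr ((3-\<tau>)-1) else 0) + (if N < j then 2*c * real j powr (-(\<tau>-2)-1) else 0))
       \<le> (1 + 3*c + 3*c/(3-\<tau>) + 4*c/(\<tau>-2)) * T powr (2-\<tau>)" .
  qed (use gf_incr[OF T0] gf0 in auto)
qed



lemma fix_parity_bounds:
  "D v \<le> fix_parity n D v" "fix_parity n D v \<le> D v + (if v = n then 1 else 0)"
  unfolding fix_parity_def by auto

lemma gf_nonneg: "0 < T \<Longrightarrow> 0 \<le> gf T d" unfolding gf_def by simp

lemma gf_mono_step: "0 < T \<Longrightarrow> gf T d \<le> gf T (Suc d)" using gf_incr(1)[of T d] by simp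

lemma gf_mono: "0 < T \<Longrightarrow> a \<le> b \<Longrightarrow> gf T a \<le> gf T b"
  by (induction b) (auto simp: le_Suc_eq intro: order_trans[OF _ gf_mono_step])

lemma Qs_gf: "Qs n D T = (\<Sum>v\<in>{1..n}. gf T (D v))" unfolding Qs_def gf_def by simp

lemma Qs_fix:
  assumes T: "0 < T" and n: "1 \<le> n"
  shows "Qs n (fix_parity n D) T \<le> (\<Sum>v\<in>{1..n}. gf T (D v)) + 2"
proof -
  have "gf T (fix_parity n D v) \<le> gf T (D v) + (if v = n then 2 else 0)" for v
  proof (cases "v = n")
    case True
    have "gf T (fix_parity n D v) \<le> gf T (Suc (D v))"
      using fix_parity_bounds(2)[of n D v] True by (intro gf_mono T) auto
    also have "\<dots> \<le> gf T (D v) + 2" using gf_incr(2)[OF T, of "D v"] by simp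
    finally show ?thesis using True by simp
  next
    case False
    thus ?thesis using fix_parity_bounds(2)[of n D v] fix_parity_bounds(1)[of D v n] by simp
  qed
  hence "Qs n (fix_parity n D) T \<le> (\<Sum>v\<in>{1..n}. gf T (D v) + (if v = n then 2 else 0))"
    unfolding Qs_gf by (intro sum_mono) auto
  also have "\<dots> = (\<Sum>v\<in>{1..n}. gf T (D v)) + (\<Sum>v\<in>{1..n}. (if v = n then 2 else 0::real))"
    by (simp add: sum.distrib)
  also have "(\<Sum>v\<in>{1..n}. (if v = n then 2 else 0::real)) = 2" using n by simp
  finally show ?thesis .
qed

lemma marginal:
  fixes n v :: nat
  assumes v: "v \<in> {1..n}"
  shows "(\<integral>\<^sup>+D. f (D v) \<partial>measure_pmf (Pi_pmf {1..n} 0 (\<lambda>_. p))) = (\<integral>\<^sup>+d. f d \<partial>measure_pmf p)"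
proof -
  have "map_pmf (\<lambda>D. D v) (Pi_pmf {1..n} 0 (\<lambda>_. p)) = p" using Pi_pmf_component[of "{1..n}" v 0 "\<lambda>_. p"] v by simp
  hence "(\<integral>\<^sup>+d. f d \<partial>measure_pmf p) = (\<integral>\<^sup>+d. f d \<partial>measure_pmf (map_pmf (\<lambda>D. D v) (Pi_pmf {1..n} 0 (\<lambda>_. p))))"
    by simp
  also have "\<dots> = (\<integral>\<^sup>+D. f (D v) \<partial>measure_pmf (Pi_pmf {1..n} 0 (\<lambda>_. p)))" by simp
  finally show ?thesis by simp
qed

lemma outer:
  assumes sp: "set_pmf p \<subseteq> {2..}" and T: "1 \<le> T" and nm: "2*m \<le> n" and n: "1 \<le> n"
    and EDp: "(\<integral>\<^sup>+d. ennreal (real d) \<partial>measure_pmf p) \<le> ennreal M1"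
    and Eg: "(\<integral>\<^sup>+d. ennreal (gf T d) \<partial>measure_pmf p) \<le> ennreal G"
    and M1: "0 \<le> M1" and G: "0 \<le> G"
  shows "measure_pmf.prob (cm_swg p n m) {xs. R_gt m xs} \<le> M1/T + (1/T + m*T/n + 2*m/n) + (m/n) * (n*G)"
proof -
  have T0: "0 < T" using T by simp
  define K0 where "K0 = 1/T + m*T/n + 2*m/n"
  have K0: "0 \<le> K0" unfolding K0_def using T0 by simp
  define F where "F D0 = (1/T) * real (D0 1) + K0 + (m/n) * (\<Sum>v\<in>{1..n}. gf T (D0 v))" for D0 :: "nat \<Rightarrow> nat"
  define PP where "PP = Pi_pmf {1..n} 0 (\<lambda>_. p)"
  have "emeasure (measure_pmf (cm_swg p n m)) {xs. R_gt m xs}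
        = (\<integral>\<^sup>+D0. emeasure (measure_pmf (swg_path n (fix_parity n D0) m)) {xs. R_gt m xs} \<partial>measure_pmf PP)"
    unfolding cm_swg_def degrees_def PP_def by simp
  also have "\<dots> \<le> (\<integral>\<^sup>+D0. ennreal (F D0) \<partial>measure_pmf PP)"
  proof (rule nn_integral_mono_AE)
    show "AE D0 in measure_pmf PP. emeasure (measure_pmf (swg_path n (fix_parity n D0) m)) {xs. R_gt m xs} \<le> ennreal (F D0)"
      unfolding AE_measure_pmf_iff
    proof
      fix D0 assume D0: "D0 \<in> set_pmf PP"
      have D02: "2 \<le> D0 v" if "v \<in> {1..n}" for v
      proof -
        have "D0 v \<in> set_pmf p" using D0 that unfolding PP_def by (auto simp: set_Pi_pmf PiE_dflt_def)
        thus ?thesis using sp by auto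
      qed
      define D where "D = fix_parity n D0"
      have D2: "\<forall>v\<in>{1..n}. 2 \<le> D v" using D02 fix_parity_bounds(1)[of D0 _ n] unfolding D_def by (meson order_trans)
      have "emeasure (measure_pmf (swg_path n D m)) {xs. R_gt m xs} \<le> ennreal (real (D 1)/T + real m * ((T + Qs n D T)/n))"
        by (rule inner_final[OF D2 T0 nm n])
      also have "real (D 1)/T + real m * ((T + Qs n D T)/n) \<le> F D0"
      proof -
        have d1: "real (D 1) \<le> real (D0 1) + 1" using fix_parity_bounds(2)[of n D0 1] unfolding D_def by (auto split: if_splits)
        have q: "Qs n D T \<le> (\<Sum>v\<in>{1..n}. gf T (D0 v)) + 2" unfolding D_def by (rule Qs_fix[OF T0 n])
        have "real (D 1)/T \<le> (real (D0 1) + 1)/T" using d1 T0 by (intro divide_right_mono) auto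
        moreover have "real m * ((T + Qs n D T)/n) \<le> real m * ((T + ((\<Sum>v\<in>{1..n}. gf T (D0 v)) + 2))/n)"
          using q n by (intro mult_left_mono divide_right_mono) auto
        moreover have "(real (D0 1) + 1)/T + real m * ((T + ((\<Sum>v\<in>{1..n}. gf T (D0 v)) + 2))/n) = F D0"
          unfolding F_def K0_def using n T0 by (simp add: field_simps)
        ultimately show ?thesis by linarith
      qed
      hence "ennreal (real (D 1)/T + real m * ((T + Qs n D T)/n)) \<le> ennreal (F D0)" by (rule ennreal_leI)
      finally show "emeasure (measure_pmf (swg_path n (fix_parity n D0) m)) {xs. R_gt m xs} \<le> ennreal (F D0)"
        unfolding D_def .
    qed
  qed
  also have "(\<integral>\<^sup>+D0. ennreal (F D0) \<partial>measure_pmf PP) = (\<integral>\<^sup>+D0. ennreal (1/T) * ennreal (real (D0 1)) + ennreal K0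
         + ennreal (m/n) * (\<Sum>v\<in>{1..n}. ennreal (gf T (D0 v))) \<partial>measure_pmf PP)"
  proof (rule nn_integral_cong)
    fix D0 :: "nat \<Rightarrow> nat"
    have s: "(\<Sum>v\<in>{1..n}. ennreal (gf T (D0 v))) = ennreal (\<Sum>v\<in>{1..n}. gf T (D0 v))"
      using gf_nonneg[OF T0] by simp
    show "ennreal (F D0) = ennreal (1/T) * ennreal (real (D0 1)) + ennreal K0 + ennreal (m/n) * (\<Sum>v\<in>{1..n}. ennreal (gf T (D0 v)))"
      unfolding s F_def using T0 K0 gf_nonneg[OF T0]
      by (simp add: ennreal_mult[symmetric] ennreal_plus[symmetric] sum_nonneg del: ennreal_plus)
  qed
  also have "\<dots> = ennreal (1/T) * (\<integral>\<^sup>+D0. ennreal (real (D0 1)) \<partial>measure_pmf PP) + ennreal K0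
         + ennreal (m/n) * (\<Sum>v\<in>{1..n}. (\<integral>\<^sup>+D0. ennreal (gf T (D0 v)) \<partial>measure_pmf PP))"
    by (simp add: nn_integral_add nn_integral_cmult nn_integral_sum)
  also have "\<dots> = ennreal (1/T) * (\<integral>\<^sup>+d. ennreal (real d) \<partial>measure_pmf p) + ennreal K0
         + ennreal (m/n) * (\<Sum>v\<in>{1..n}. (\<integral>\<^sup>+d. ennreal (gf T d) \<partial>measure_pmf p))"
  proof -
    have m1: "(\<integral>\<^sup>+D0. ennreal (real (D0 1)) \<partial>measure_pmf PP) = (\<integral>\<^sup>+d. ennreal (real d) \<partial>measure_pmf p)"
      unfolding PP_def by (rule marginal) (use n in auto)
    have m2: "(\<Sum>v\<in>{1..n}. (\<integral>\<^sup>+D0. ennreal (gf T (D0 v)) \<partial>measure_pmf PP)) = (\<Sum>v\<in>{1..n}. (\<integral>\<^sup>+d. ennreal (gf T d) \<partial>measure_pmf p))"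
      unfolding PP_def by (intro sum.cong refl marginal)
    show ?thesis by (simp only: m1 m2)
  qed
  also have "\<dots> \<le> ennreal (1/T) * ennreal M1 + ennreal K0 + ennreal (m/n) * (\<Sum>v\<in>{1..n}. ennreal G)"
    by (intro add_mono mult_left_mono sum_mono EDp Eg order_refl) auto
  also have "\<dots> = ennreal (M1/T + K0 + (m/n) * (n*G))"
    using T0 M1 K0 G by (simp add: ennreal_mult[symmetric] ennreal_plus[symmetric] ennreal_of_nat_eq_real_of_nat del: ennreal_plus)
  finally have "ennreal (measure_pmf.prob (cm_swg p n m) {xs. R_gt m xs}) \<le> ennreal (M1/T + K0 + (m/n) * (n*G))"
    by (simp add: measure_pmf.emeasure_eq_measure)
  hence "measure_pmf.prob (cm_swg p n m) {xs. R_gt m xs} \<le> M1/T + K0 + (m/n) * (n*G)"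
    using T0 M1 K0 G by (subst (asm) ennreal_le_iff) auto
  thus ?thesis unfolding K0_def by simp
qed



lemma powr_ratio:
  assumes n: "1 \<le> n"
  shows "real n / real n powr \<alpha> = real n powr (1 - \<alpha>)"
proof -
  have "real n / real n powr \<alpha> = real n powr 1 / real n powr \<alpha>" using n by simp
  also have "\<dots> = real n powr (1 - \<alpha>)" by (rule powr_diff[symmetric])
  finally show ?thesis .
qed

lemma lin_aux: "x1 + x2 = (X::real) \<Longrightarrow> A = Ma \<Longrightarrow> B \<le> 2*Ma \<Longrightarrow> C = K' \<Longrightarrow> x1 + (x2 + A + B) + C \<le> X + Ma + 2*Ma + K'"
  by linarith

lemma final_gen:
  fixes p :: "nat pmf" and m :: "nat \<Rightarrow> nat" and \<alpha> K M1 :: real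
  assumes sp: "set_pmf p \<subseteq> {2..}" and alpha: "0 < \<alpha>" "\<alpha> < 1"
    and EDp: "(\<integral>\<^sup>+d. ennreal (real d) \<partial>measure_pmf p) \<le> ennreal M1" and M1: "0 \<le> M1"
    and Eg: "\<And>n. 1 \<le> n \<Longrightarrow> (\<integral>\<^sup>+d. ennreal (gf (real n / real n powr \<alpha>) d) \<partial>measure_pmf p) \<le> ennreal (K / real n powr \<alpha>)"
    and K: "0 \<le> K"
    and m_small: "(\<lambda>n. real (m n) / real n powr \<alpha>) \<longlonglongrightarrow> 0"
  shows "(\<lambda>n. measure_pmf.prob (cm_swg p n (m n)) {xs. R_gt (m n) xs}) \<longlonglongrightarrow> 0"
proof (rule tendsto_sandwich[where f="\<lambda>_. 0" and h="\<lambda>n. (M1 + 1) * real n powr (\<alpha> - 1) + (3 + K) * (real (m n) / real n powr \<alpha>)"])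
  show "\<forall>\<^sub>F n in sequentially. 0 \<le> measure_pmf.prob (cm_swg p n (m n)) {xs. R_gt (m n) xs}" by simp
  show "((\<lambda>n. 0) \<longlongrightarrow> 0) sequentially" by simp
  have l1: "(\<lambda>n. real n powr (\<alpha> - 1)) \<longlonglongrightarrow> 0"
    by (rule tendsto_neg_powr) (use alpha filterlim_real_sequentially in auto)
  show "(\<lambda>n. (M1 + 1) * real n powr (\<alpha> - 1) + (3 + K) * (real (m n) / real n powr \<alpha>)) \<longlonglongrightarrow> 0"
    using tendsto_add[OF tendsto_mult_right_zero[OF l1] tendsto_mult_right_zero[OF m_small]] by simp
  have ev: "\<forall>\<^sub>F n in sequentially. real (m n) / real n powr \<alpha> < 1/4"
    using m_small by (rule order_tendstoD) simp
  show "\<forall>\<^sub>F n in sequentially. measure_pmf.prob (cm_swg p n (m n)) {xs. R_gt (m n) xs}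
          \<le> (M1 + 1) * real n powr (\<alpha> - 1) + (3 + K) * (real (m n) / real n powr \<alpha>)"
    using ev eventually_ge_at_top[of 1]
  proof eventually_elim
    case (elim n)
    have n1: "1 \<le> n" using elim by simp
    define a where "a = real n powr \<alpha>"
    define T where "T = real n / a"
    have a0: "0 < a" unfolding a_def using n1 by simp
    have an: "a \<le> real n"
    proof -
      have "a \<le> real n powr 1" unfolding a_def by (rule powr_mono) (use alpha n1 in auto)
      thus ?thesis using n1 by simp
    qed
    have Tp: "T = real n powr (1 - \<alpha>)" unfolding T_def a_def by (rule powr_ratio[OF n1])
    have T1: "1 \<le> T" unfolding Tp using alpha n1 by (simp add: ge_one_powr_ge_zero)
    have ma: "real (m n) / a < 1/4" using elim unfolding a_def by simp
    hence "real (m n) \<le> a / 4" using a0 by (simp add: field_simps)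
    hence nm: "2 * m n \<le> n" using an by linarith
    have "measure_pmf.prob (cm_swg p n (m n)) {xs. R_gt (m n) xs}
          \<le> M1/T + (1/T + real (m n)*T/n + 2*real (m n)/n) + (real (m n)/n) * (n*(K/a))"
      by (rule outer[OF sp T1 nm n1 EDp _ M1]) (use Eg[OF n1] K a0 in \<open>auto simp: T_def a_def\<close>)
    also have "\<dots> \<le> (M1 + 1) * real n powr (\<alpha> - 1) + (3 + K) * (real (m n) / a)"
    proof -
      have iT: "1/T = real n powr (\<alpha> - 1)" unfolding Tp by (simp add: powr_minus_divide[symmetric])
      have e1: "real (m n)*T/n = real (m n)/a" unfolding T_def using n1 a0 by (simp add: field_simps)
      have e2: "2*real (m n)/n \<le> 2 * (real (m n)/a)" using an a0 n1 by (simp add: frac_le)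
      have e3: "(real (m n)/n) * (n*(K/a)) = K * (real (m n)/a)" using n1 by (simp add: field_simps)
      have "M1/T + (1/T + real (m n)*T/n + 2*real (m n)/n) + (real (m n)/n) * (n*(K/a))
          \<le> (M1 + 1) * (1/T) + real (m n)/a + 2 * (real (m n)/a) + K * (real (m n)/a)"
      proof -
        have e0: "M1/T + 1/T = (M1+1)*(1/T)" by (simp add: add_divide_distrib)
        show ?thesis by (rule lin_aux[OF e0 e1 e2 e3])
      qed
      also have "\<dots> = (M1 + 1) * real n powr (\<alpha> - 1) + (3 + K) * (real (m n) / a)"
        unfolding iT by (simp add: algebra_simps add_divide_distrib)
      finally show ?thesis .
    qed
    finally show ?case unfolding a_def .
  qed
qed



theorem lemmaA1:
  fixes p :: "nat pmf" and \<tau> :: real and a :: "nat \<Rightarrow> real" and m :: "nat \<Rightarrow> nat"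
  assumes cases:
    "(\<forall>x<2. deg_cdf p x = 0) \<and> nondegenerate (deg_cdf p) \<and>
     ((\<tau> > 3 \<and> (\<exists>c>0. \<forall>x>0. 1 - deg_cdf p x \<le> c * x powr (-(\<tau> - 1)))
        \<and> a = (\<lambda>n. real n powr (1/2)))
    \<or> (2 < \<tau> \<and> \<tau> < 3 \<and>
        (\<exists>c1 c2. 0 < c1 \<and> c1 \<le> c2 \<and>
           (\<forall>x\<ge>1. c1 * x powr (-(\<tau> - 1)) \<le> 1 - deg_cdf p x) \<and>
           (\<forall>x>0. 1 - deg_cdf p x \<le> c2 * x powr (-(\<tau> - 1))))
        \<and> a = (\<lambda>n. real n powr ((\<tau> - 2) / (\<tau> - 1)))))"
  assumes m_small: "(\<lambda>n. real (m n) / a n) \<longlonglongrightarrow> 0"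
  shows "(\<lambda>n. measure_pmf.prob (cm_swg p n (m n)) {xs. R_gt (m n) xs}) \<longlonglongrightarrow> 0"
proof -
  have H: "(\<forall>x<2. deg_cdf p x = 0)" and rest: "((\<tau> > 3 \<and> (\<exists>c>0. \<forall>x>0. 1 - deg_cdf p x \<le> c * x powr (-(\<tau> - 1)))
        \<and> a = (\<lambda>n. real n powr (1/2)))
    \<or> (2 < \<tau> \<and> \<tau> < 3 \<and>
        (\<exists>c1 c2. 0 < c1 \<and> c1 \<le> c2 \<and>
           (\<forall>x\<ge>1. c1 * x powr (-(\<tau> - 1)) \<le> 1 - deg_cdf p x) \<and>
           (\<forall>x>0. 1 - deg_cdf p x \<le> c2 * x powr (-(\<tau> - 1))))
        \<and> a = (\<lambda>n. real n powr ((\<tau> - 2) / (\<tau> - 1)))))"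
    using cases by auto
  have sp: "set_pmf p \<subseteq> {2..}"
  proof
    fix k assume k: "k \<in> set_pmf p"
    have "deg_cdf p (3/2) = 0" using H by simp
    hence "set_pmf p \<inter> {k. real k \<le> 3/2} = {}" unfolding deg_cdf_def by (simp add: measure_pmf_zero_iff)
    hence "\<not> real k \<le> 3/2" using k by blast
    thus "k \<in> {2..}" by simp
  qed
  have tailI: "\<forall>j::nat. 1 \<le> j \<longrightarrow> measure_pmf.prob p {d. j < d} \<le> c * real j powr (-(\<tau>-1))"
    if hc: "\<forall>x>0. 1 - deg_cdf p x \<le> c * x powr (-(\<tau> - 1))" for c
  proof (intro allI impI)
    fix j :: nat assume j: "1 \<le> j"
    have "{d. j < d} = space (measure_pmf p) - {k. real k \<le> real j}" by auto
    moreover have "measure_pmf.prob p (space (measure_pmf p) - {k. real k \<le> real j}) = 1 - measure_pmf.prob p {k. real k \<le> real j}"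
      by (rule measure_pmf.prob_compl) simp
    ultimately have "measure_pmf.prob p {d. j < d} = 1 - deg_cdf p (real j)"
      unfolding deg_cdf_def by simp
    also have "\<dots> \<le> c * real j powr (-(\<tau>-1))" using hc j by simp
    finally show "measure_pmf.prob p {d. j < d} \<le> c * real j powr (-(\<tau>-1))" .
  qed
  from rest show ?thesis
  proof
    assume h: "\<tau> > 3 \<and> (\<exists>c>0. \<forall>x>0. 1 - deg_cdf p x \<le> c * x powr (-(\<tau> - 1))) \<and> a = (\<lambda>n. real n powr (1/2))"
    then obtain c where c: "0 < c" "\<forall>x>0. 1 - deg_cdf p x \<le> c * x powr (-(\<tau> - 1))" by blast
    have tau: "3 < \<tau>" and aeq: "a = (\<lambda>n. real n powr (1/2))" using h by auto
    have tail: "\<forall>j::nat. 1 \<le> j \<longrightarrow> measure_pmf.prob p {d. j < d} \<le> c * real j powr (-(\<tau>-1))"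
      by (rule tailI[OF c(2)])
    show ?thesis
    proof (rule final_gen[OF sp, where \<alpha>="1/2" and K="1 + 3*c + 3*c/(\<tau>-3)"])
      show "(\<integral>\<^sup>+d. ennreal (real d) \<partial>measure_pmf p) \<le> ennreal (1 + c + c/(\<tau>-2))"
        by (rule E1[OF tail c(1)]) (use tau in simp)
      show "0 \<le> 1 + c + c/(\<tau>-2)" using c tau by simp
      show "0 \<le> 1 + 3*c + 3*c/(\<tau>-3)" using c tau by simp
      show "(\<lambda>n. real (m n) / real n powr (1/2)) \<longlonglongrightarrow> 0" using m_small aeq by simp
      fix n :: nat assume n: "1 \<le> n"
      have Teq: "real n / real n powr (1/2) = real n powr (1/2)"
        using powr_ratio[OF n, of "1/2"] by simp
      show "(\<integral>\<^sup>+d. ennreal (gf (real n / real n powr (1/2)) d) \<partial>measure_pmf p) \<le> ennreal ((1 + 3*c + 3*c/(\<tau>-3)) / real n powr (1/2))"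
        unfolding Teq by (rule E2[OF tail c(1) tau]) (use n in simp)
    qed auto
  next
    assume h: "2 < \<tau> \<and> \<tau> < 3 \<and>
        (\<exists>c1 c2. 0 < c1 \<and> c1 \<le> c2 \<and>
           (\<forall>x\<ge>1. c1 * x powr (-(\<tau> - 1)) \<le> 1 - deg_cdf p x) \<and>
           (\<forall>x>0. 1 - deg_cdf p x \<le> c2 * x powr (-(\<tau> - 1))))
        \<and> a = (\<lambda>n. real n powr ((\<tau> - 2) / (\<tau> - 1)))"
    then obtain c1 c2 where c: "0 < c1" "c1 \<le> c2" "\<forall>x>0. 1 - deg_cdf p x \<le> c2 * x powr (-(\<tau> - 1))" by blast
    have c2: "0 < c2" using c by simp
    have tau: "2 < \<tau>" "\<tau> < 3" and aeq: "a = (\<lambda>n. real n powr ((\<tau> - 2) / (\<tau> - 1)))" using h by auto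
    have tail: "\<forall>j::nat. 1 \<le> j \<longrightarrow> measure_pmf.prob p {d. j < d} \<le> c2 * real j powr (-(\<tau>-1))"
      by (rule tailI[OF c(3)])
    define \<alpha> where "\<alpha> = (\<tau> - 2) / (\<tau> - 1)"
    have alpha: "0 < \<alpha>" "\<alpha> < 1" unfolding \<alpha>_def using tau by (auto simp: field_simps)
    show ?thesis
    proof (rule final_gen[OF sp alpha, where K="1 + 3*c2 + 3*c2/(3-\<tau>) + 4*c2/(\<tau>-2)"])
      show "(\<integral>\<^sup>+d. ennreal (real d) \<partial>measure_pmf p) \<le> ennreal (1 + c2 + c2/(\<tau>-2))"
        by (rule E1[OF tail c2 tau(1)])
      show "0 \<le> 1 + c2 + c2/(\<tau>-2)" using c2 tau by simp
      show "0 \<le> 1 + 3*c2 + 3*c2/(3-\<tau>) + 4*c2/(\<tau>-2)" using c2 tau by simp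
      show "(\<lambda>n. real (m n) / real n powr \<alpha>) \<longlonglongrightarrow> 0" using m_small aeq unfolding \<alpha>_def by simp
      fix n :: nat assume n: "1 \<le> n"
      define T where "T = real n / real n powr \<alpha>"
      have Teq: "T = real n powr (1 - \<alpha>)" unfolding T_def by (rule powr_ratio[OF n])
      have T1: "1 \<le> T" unfolding Teq using alpha n by (simp add: ge_one_powr_ge_zero)
      have TP: "T powr (2 - \<tau>) = 1 / real n powr \<alpha>"
      proof -
        have "T powr (2 - \<tau>) = real n powr ((1 - \<alpha>) * (2 - \<tau>))" unfolding Teq by (rule powr_powr)
        also have "(1 - \<alpha>) * (2 - \<tau>) = - \<alpha>" unfolding \<alpha>_def using tau by (simp add: field_simps)
        also have "real n powr (- \<alpha>) = 1 / real n powr \<alpha>" by (rule powr_minus_divide)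
        finally show ?thesis .
      qed
      have "(\<integral>\<^sup>+d. ennreal (gf T d) \<partial>measure_pmf p) \<le> ennreal ((1 + 3*c2 + 3*c2/(3-\<tau>) + 4*c2/(\<tau>-2)) * T powr (2-\<tau>))"
        by (rule E3[OF tail c2 tau T1])
      thus "(\<integral>\<^sup>+d. ennreal (gf (real n / real n powr \<alpha>) d) \<partial>measure_pmf p) \<le> ennreal ((1 + 3*c2 + 3*c2/(3-\<tau>) + 4*c2/(\<tau>-2)) / real n powr \<alpha>)"
        unfolding T_def[symmetric] TP by simp
    qed
  qed
qed

end
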